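(* Let $G$ be a scheduling game on $m$ related machines (speeds $s_1,\dots,s_m>0$, arbitrary machine-dependent priority lists $\pi_1,\dots,\pi_m$) in which all jobs have the same processing-time function $p$, where either $p(t)=b+a t$ for all jobs ($b,a\ge 0$) or $p(t)=\max\{\tau,b-a t\}$ for all jobs ($b,a\ge0$, $\tau>0$). Run the following algorithm: set $\ell_j=0$ for all machines $j$; repeat, until all jobs are assigned: choose $j^\star\in\arg\min_j\big(\ell_j+p(\ell_j)/s_j\big)$, assign to machine $j^\star$ the unassigned job with highest priority in $\pi_{j^\star}$ (smallest $\pi_{j^\star}$-value), and set $\ell_{j^\star}\leftarrow \ell_{j^\star}+p(\ell_{j^\star})/s_{j^\star}$. Then the resulting profile is a pure Nash equilibrium of $G$.
   Context: Scheduling game: a finite set $N$ of $n\ge1$ jobs (players) and a set $M$ of $m\ge1$ machines. Machine $j$ has speed $s_j>0$ and a priority list $\pi_j$, a bijection $N\to\{1,\dots,n\}$; job $u$ has higher priority than $v$ on $j$ iff $\pi_j(u)<\pi_j(v)$. Each job $i$ has a processing-time function $p_i$: with positive deterioration $p_i(t)=b_i+a_it$ ($b_i,a_i\ge0$), with negative deterioration $p_i(t)=\max\{\tau_i,b_i-a_it\}$ ($b_i,a_i\ge0$, $\tau_i>0$). A profile $\sigma\in M^N$ assigns each job to a machine. On machine $j$, the jobs assigned to it, listed in increasing $\pi_j$-order as $i_1,i_2,\dots$, are processed without idle time: $S_{i_1}(\sigma)=0$, $C_{i_k}(\sigma)=S_{i_k}(\sigma)+p_{i_k}(S_{i_k}(\sigma))/s_j$,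 $S_{i_{k+1}}(\sigma)=C_{i_k}(\sigma)$. The cost of job $i$ is its completion time $C_i(\sigma)$. A pure Nash equilibrium (NE) is a profile in which no job can strictly decrease its completion time by unilaterally changing its machine. *)

theory Defs
  imports Complex_Main
begin

text \<open>A priority list of machine j is
  pri j :: 'j \<Rightarrow> nat, a bijection from N onto {1..n}.
  P i :: real \<Rightarrow> real is the processing-time function of job i.\<close>

text \<open>The jobs assigned to machine j under profile sigma, listed in increasing
  priority-value order (highest priority first).\<close>
definition machine_list ::
  "('m \<Rightarrow> 'j \<Rightarrow> nat) \<Rightarrow> 'j set \<Rightarrow> ('j \<Rightarrow> 'm) \<Rightarrow> 'm \<Rightarrow> 'j list" where
  "machine_list pri N sigma j =
     (SOME xs. distinct xs \<and> set xs = {i \<in> N. sigma i = j}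
              \<and> sorted_wrt (\<lambda>u v. pri j u < pri j v) xs)"

fun comp_time :: "('j \<Rightarrow> real \<Rightarrow> real) \<Rightarrow> real \<Rightarrow> real \<Rightarrow> 'j list \<Rightarrow> 'j \<Rightarrow> real" where
  "comp_time P sp t [] i = 0"
| "comp_time P sp t (x # xs) i =
     (let c = t + P x t / sp in if x = i then c else comp_time P sp c xs i)"

definition completion ::
  "('j \<Rightarrow> real \<Rightarrow> real) \<Rightarrow> ('m \<Rightarrow> real) \<Rightarrow> ('m \<Rightarrow> 'j \<Rightarrow> nat) \<Rightarrow> 'j set
     \<Rightarrow> ('j \<Rightarrow> 'm) \<Rightarrow> 'j \<Rightarrow> real" where
  "completion P s pri N sigma i =
     comp_time P (s (sigma i)) 0 (machine_list pri N sigma (sigma i)) i"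

definition is_NE ::
  "('j \<Rightarrow> real \<Rightarrow> real) \<Rightarrow> ('m \<Rightarrow> real) \<Rightarrow> ('m \<Rightarrow> 'j \<Rightarrow> nat) \<Rightarrow> 'j set \<Rightarrow> 'm set
     \<Rightarrow> ('j \<Rightarrow> 'm) \<Rightarrow> bool" where
  "is_NE P s pri N M sigma \<longleftrightarrow>
     (\<forall>i\<in>N. sigma i \<in> M) \<and>
     (\<forall>i\<in>N. \<forall>j\<in>M. \<not> (completion P s pri N (sigma(i := j)) i < completion P s pri N sigma i))"

text \<open>One iteration of the greedy algorithm. State: (loads l, unassigned jobs U,
  partial profile sigma). Any minimiser j* may be chosen (arbitrary tie-breaking).\<close>
inductive alg_step ::
  "(real \<Rightarrow> real) \<Rightarrow> ('m \<Rightarrow> real) \<Rightarrow> ('m \<Rightarrow> 'j \<Rightarrow> nat) \<Rightarrow> 'm set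
     \<Rightarrow> ('m \<Rightarrow> real) \<times> 'j set \<times> ('j \<Rightarrow> 'm)
     \<Rightarrow> ('m \<Rightarrow> real) \<times> 'j set \<times> ('j \<Rightarrow> 'm) \<Rightarrow> bool"
  for p s pri M where
  "\<lbrakk> jst \<in> M;
     \<forall>j\<in>M. l jst + p (l jst) / s jst \<le> l j + p (l j) / s j;
     i \<in> U;
     \<forall>k\<in>U. pri jst i \<le> pri jst k \<rbrakk>
   \<Longrightarrow> alg_step p s pri M (l, U, sigma)
         (l(jst := l jst + p (l jst) / s jst), U - {i}, sigma(i := jst))"

end

theory Submission
  imports Defs
begin

definition GG :: "(real \<Rightarrow> real) \<Rightarrow> real \<Rightarrow> nat \<Rightarrow> real" where
  "GG p sp n = ((\<lambda>t. t + p t / sp) ^^ n) 0"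

lemma comp_time_sorted:
  fixes f :: "'a \<Rightarrow> nat"
  assumes "distinct xs" "sorted_wrt (\<lambda>u v. f u < f v) xs" "i \<in> set xs"
    "\<forall>x\<in>set xs. P x = p"
  shows "comp_time P sp t xs i = ((\<lambda>t. t + p t / sp) ^^ Suc (card {x\<in>set xs. f x < f i})) t"
  using assms
proof (induction xs arbitrary: t)
  case Nil
  then show ?case by simp
next
  case (Cons x xs)
  show ?case
  proof (cases "x = i")
    case True
    have "\<forall>y\<in>set xs. f i < f y" using Cons.prems(2) True by simp
    then have "{y\<in>set (x#xs). f y < f i} = {}" using True by force
    then have c0: "card {y\<in>set (x#xs). f y < f i} = 0" by (simp only: card.empty)
    show ?thesis unfolding c0 using True Cons.prems(4) by (simp add: Let_def)
  next
    case False
    have iin: "i \<in> set xs" using Cons.prems(3) False by simp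
    have "f x < f i" using Cons.prems(2) iin by simp
    then have "{y\<in>set (x#xs). f y < f i} = insert x {y\<in>set xs. f y < f i}" by auto
    moreover have "x \<notin> set xs" using Cons.prems(1) by simp
    ultimately have c: "card {y\<in>set (x#xs). f y < f i} = Suc (card {y\<in>set xs. f y < f i})"
      by simp
    have "comp_time P sp t (x#xs) i = comp_time P sp (t + p t / sp) xs i"
      using False Cons.prems(4) by (simp add: Let_def)
    also have "\<dots> = ((\<lambda>t. t + p t / sp) ^^ Suc (card {x\<in>set xs. f x < f i})) (t + p t / sp)"
      using Cons.IH[of "t + p t / sp"] Cons.prems iin by simp
    also have "\<dots> = ((\<lambda>t. t + p t / sp) ^^ Suc (card {y\<in>set (x#xs). f y < f i})) t"
      unfolding c by (simp only: funpow_Suc_right o_apply)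
    finally show ?thesis .
  qed
qed
lemma sorted_exists:
  assumes "finite S" "inj_on f S"
  shows "\<exists>xs. distinct xs \<and> set xs = S \<and> sorted_wrt (\<lambda>u v. (f u :: nat) < f v) xs"
proof -
  obtain ys where ys: "distinct ys" "set ys = S" using finite_distinct_list[OF assms(1)] by blast
  define xs where "xs = sort_key f ys"
  have d: "distinct xs" "set xs = S" using ys by (auto simp: xs_def)
  have "sorted (map f xs)" by (simp add: xs_def)
  moreover have "distinct (map f xs)" using d assms(2) by (simp add: distinct_map)
  ultimately have "sorted_wrt (<) (map f xs)" by (simp add: strict_sorted_iff)
  then have "sorted_wrt (\<lambda>u v. f u < f v) xs" by (simp add: sorted_wrt_map)
  with d show ?thesis by blast
qed

lemma completion_eq:
  assumes "finite N" "i \<in> N" "inj_on (pri (sigma i)) N" "\<forall>x\<in>N. P x = p"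
  shows "completion P s pri N sigma i =
     GG p (s (sigma i)) (Suc (card {x\<in>N. sigma x = sigma i \<and> pri (sigma i) x < pri (sigma i) i}))"
proof -
  let ?j = "sigma i"
  let ?Q = "\<lambda>xs. distinct xs \<and> set xs = {x \<in> N. sigma x = ?j}
              \<and> sorted_wrt (\<lambda>u v. pri ?j u < pri ?j v) xs"
  have "\<exists>xs. ?Q xs"
    by (rule sorted_exists) (use assms in \<open>auto intro: inj_on_subset\<close>)
  then have Q: "?Q (machine_list pri N sigma ?j)"
    unfolding machine_list_def by (rule someI_ex)
  have "{x\<in>set (machine_list pri N sigma ?j). pri ?j x < pri ?j i}
      = {x\<in>N. sigma x = ?j \<and> pri ?j x < pri ?j i}" using Q by auto
  note seteq = this
  have ct: "comp_time P (s ?j) 0 (machine_list pri N sigma ?j) i =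
     ((\<lambda>t. t + p t / s ?j) ^^ Suc (card {x\<in>set (machine_list pri N sigma ?j). pri ?j x < pri ?j i})) 0"
  proof (rule comp_time_sorted)
    show "distinct (machine_list pri N sigma ?j)" using Q by blast
    show "sorted_wrt (\<lambda>u v. pri ?j u < pri ?j v) (machine_list pri N sigma ?j)" using Q by blast
    show "i \<in> set (machine_list pri N sigma ?j)" using Q assms(2) by blast
    show "\<forall>x\<in>set (machine_list pri N sigma ?j). P x = p" using Q assms(4) by blast
  qed
  show ?thesis
    unfolding completion_def GG_def ct seteq ..
qed

lemma GG_mono:
  assumes "sp > 0" "\<forall>t\<ge>0. p t \<ge> 0" "m \<le> n"
  shows "GG p sp m \<le> GG p sp n"
proof -
  have nn: "GG p sp k \<ge> 0" for k
    by (induction k) (use assms in \<open>auto simp: GG_def\<close>)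
  have "GG p sp k \<le> GG p sp (Suc k)" for k
    using nn[of k] assms by (simp add: GG_def)
  then show ?thesis using assms(3) by (rule lift_Suc_mono_le)
qed

lemma GG_Suc: "GG p sp (Suc n) = GG p sp n + p (GG p sp n) / sp"
  by (simp add: GG_def)

definition Inv where
  "Inv p s pri N M st = (case st of (l, U, sigma) \<Rightarrow>
     U \<subseteq> N \<and>
     (\<forall>j\<in>M. l j = GG p (s j) (card {x\<in>N-U. sigma x = j})) \<and>
     (\<forall>i\<in>N-U. sigma i \<in> M) \<and>
     (\<forall>x\<in>N-U. \<forall>k\<in>U. pri (sigma x) x < pri (sigma x) k) \<and>
     (\<forall>i\<in>N-U. \<forall>j\<in>M.
        GG p (s (sigma i)) (Suc (card {x\<in>N-U. sigma x = sigma i \<and> pri (sigma i) x < pri (sigma i) i}))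
        \<le> GG p (s j) (Suc (card {x\<in>N-U. sigma x = j \<and> x \<noteq> i \<and> pri j x < pri j i}))))"

lemma step_pres:
  assumes st: "alg_step p s pri M st st'" and inv: "Inv p s pri N M st"
    and fin: "finite N" and spos: "\<forall>j\<in>M. s j > 0"
    and inj: "\<forall>j\<in>M. inj_on (pri j) N"
    and pnn: "\<forall>t\<ge>0. p t \<ge> 0"
  shows "Inv p s pri N M st'"
  using st
proof cases
  case (1 jst l i0 U sigma)
  note c = 1
  let ?U' = "U - {i0}"
  let ?s' = "sigma(i0 := jst)"
  let ?l' = "l(jst := l jst + p (l jst) / s jst)"
  from inv c have UN: "U \<subseteq> N"
    and L: "\<forall>j\<in>M. l j = GG p (s j) (card {x\<in>N-U. sigma x = j})"
    and SM: "\<forall>i\<in>N-U. sigma i \<in> M"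
    and PR: "\<forall>x\<in>N-U. \<forall>k\<in>U. pri (sigma x) x < pri (sigma x) k"
    and C: "\<forall>i\<in>N-U. \<forall>j\<in>M.
        GG p (s (sigma i)) (Suc (card {x\<in>N-U. sigma x = sigma i \<and> pri (sigma i) x < pri (sigma i) i}))
        \<le> GG p (s j) (Suc (card {x\<in>N-U. sigma x = j \<and> x \<noteq> i \<and> pri j x < pri j i}))"
    unfolding Inv_def by auto
  have i0N: "i0 \<in> N" using c UN by auto
  have NU': "N - ?U' = insert i0 (N - U)" using i0N by auto
  have i0n: "i0 \<notin> N - U" using c by auto
  have finNU: "finite (N - U)" using fin by auto
  have cnt: "card {x\<in>N-?U'. ?s' x = j} =
      (if j = jst then Suc (card {x\<in>N-U. sigma x = j}) else card {x\<in>N-U. sigma x = j})" for j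
  proof (cases "j = jst")
    case True
    have "{x\<in>N-?U'. ?s' x = j} = insert i0 {x\<in>N-U. sigma x = j}" using True c i0N by auto
    moreover have "finite {x\<in>N-U. sigma x = j}" using fin by auto
    moreover have "i0 \<notin> {x\<in>N-U. sigma x = j}" using i0n by auto
    ultimately show ?thesis using True by simp
  next
    case False
    have "{x\<in>N-?U'. ?s' x = j} = {x\<in>N-U. sigma x = j}" using False c i0N by auto
    then show ?thesis using False by simp
  qed
  have I1: "\<forall>j\<in>M. ?l' j = GG p (s j) (card {x\<in>N-?U'. ?s' x = j})"
  proof
    fix j assume j: "j \<in> M"
    show "?l' j = GG p (s j) (card {x\<in>N-?U'. ?s' x = j})"
    proof (cases "j = jst")
      case True
      then show ?thesis using bspec[OF L j] cnt[of j] by (simp add: GG_Suc)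
    next
      case False
      then show ?thesis using bspec[OF L j] cnt[of j] by simp
    qed
  qed
  have I2: "\<forall>i\<in>N-?U'. ?s' i \<in> M" using SM c i0N by auto
  have I3: "\<forall>x\<in>N-?U'. \<forall>k\<in>?U'. pri (?s' x) x < pri (?s' x) k"
  proof (intro ballI)
    fix x k assume x: "x \<in> N - ?U'" and k: "k \<in> ?U'"
    show "pri (?s' x) x < pri (?s' x) k"
    proof (cases "x = i0")
      case True
      have "pri jst i0 \<le> pri jst k" using c k by auto
      moreover have "pri jst i0 \<noteq> pri jst k"
        using inj c k i0N UN unfolding inj_on_def by blast
      ultimately show ?thesis using True by simp
    next
      case False
      then show ?thesis using PR x k c i0N by auto
    qed
  qed
  have I4: "\<forall>i\<in>N-?U'. \<forall>j\<in>M.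
        GG p (s (?s' i)) (Suc (card {x\<in>N-?U'. ?s' x = ?s' i \<and> pri (?s' i) x < pri (?s' i) i}))
        \<le> GG p (s j) (Suc (card {x\<in>N-?U'. ?s' x = j \<and> x \<noteq> i \<and> pri j x < pri j i}))"
  proof (intro ballI)
    fix i j assume i: "i \<in> N - ?U'" and j: "j \<in> M"
    show "GG p (s (?s' i)) (Suc (card {x\<in>N-?U'. ?s' x = ?s' i \<and> pri (?s' i) x < pri (?s' i) i}))
        \<le> GG p (s j) (Suc (card {x\<in>N-?U'. ?s' x = j \<and> x \<noteq> i \<and> pri j x < pri j i}))"
    proof (cases "i = i0")
      case True
      have e1: "{x\<in>N-?U'. ?s' x = ?s' i \<and> pri (?s' i) x < pri (?s' i) i} = {x\<in>N-U. sigma x = jst}"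
        using True PR c i0N by auto
      have e2: "{x\<in>N-?U'. ?s' x = j \<and> x \<noteq> i \<and> pri j x < pri j i} = {x\<in>N-U. sigma x = j}"
        using True PR c i0N by auto
      have "GG p (s jst) (Suc (card {x\<in>N-U. sigma x = jst})) = l jst + p (l jst) / s jst"
        using L c by (simp add: GG_Suc)
      also have "\<dots> \<le> l j + p (l j) / s j" using c j by auto
      also have "\<dots> = GG p (s j) (Suc (card {x\<in>N-U. sigma x = j}))"
        using L j by (simp add: GG_Suc)
      finally show ?thesis using e1 e2 True by simp
    next
      case False
      have iold: "i \<in> N - U" using i False by auto
      have si: "?s' i = sigma i" using False by simp
      have e1: "{x\<in>N-?U'. ?s' x = ?s' i \<and> pri (?s' i) x < pri (?s' i) i}
          = {x\<in>N-U. sigma x = sigma i \<and> pri (sigma i) x < pri (sigma i) i}"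
      proof -
        have "\<not> (sigma i = jst \<and> pri (sigma i) i0 < pri (sigma i) i)"
        proof
          assume a: "sigma i = jst \<and> pri (sigma i) i0 < pri (sigma i) i"
          have "pri (sigma i) i < pri (sigma i) i0" using bspec[OF bspec[OF PR iold], of i0] c by simp
          then show False using a by (metis less_asym)
        qed
        then show ?thesis using si c i0N by auto
      qed
      have sub: "{x\<in>N-U. sigma x = j \<and> x \<noteq> i \<and> pri j x < pri j i}
          \<subseteq> {x\<in>N-?U'. ?s' x = j \<and> x \<noteq> i \<and> pri j x < pri j i}"
        using c i0N by auto
      have "card {x\<in>N-U. sigma x = j \<and> x \<noteq> i \<and> pri j x < pri j i}
          \<le> card {x\<in>N-?U'. ?s' x = j \<and> x \<noteq> i \<and> pri j x < pri j i}"
        by (rule card_mono[OF _ sub]) (use fin in auto)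
      then have "GG p (s j) (Suc (card {x\<in>N-U. sigma x = j \<and> x \<noteq> i \<and> pri j x < pri j i}))
          \<le> GG p (s j) (Suc (card {x\<in>N-?U'. ?s' x = j \<and> x \<noteq> i \<and> pri j x < pri j i}))"
        using GG_mono spos j pnn by simp
      moreover have "GG p (s (sigma i)) (Suc (card {x\<in>N-U. sigma x = sigma i \<and> pri (sigma i) x < pri (sigma i) i}))
        \<le> GG p (s j) (Suc (card {x\<in>N-U. sigma x = j \<and> x \<noteq> i \<and> pri j x < pri j i}))"
        using bspec[OF bspec[OF C iold] j] .
      ultimately show ?thesis using e1 si by simp
    qed
  qed
  have UN': "?U' \<subseteq> N" using UN by auto
  show ?thesis unfolding c(2) Inv_def prod.case by (intro conjI UN' I1 I2 I3 I4)
qed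

theorem theorem1:
  fixes N :: "'j set" and M :: "'m set"
    and s :: "'m \<Rightarrow> real" and pri :: "'m \<Rightarrow> 'j \<Rightarrow> nat"
    and P :: "'j \<Rightarrow> real \<Rightarrow> real" and p :: "real \<Rightarrow> real"
    and sigma0 sigma :: "'j \<Rightarrow> 'm" and l :: "'m \<Rightarrow> real"
  assumes "finite N" "N \<noteq> {}" "finite M" "M \<noteq> {}"
    and "\<forall>j\<in>M. s j > 0"
    and "\<forall>j\<in>M. bij_betw (pri j) N {1..card N}"
    and "\<forall>i\<in>N. P i = p"
    and "(\<exists>a b. a \<ge> 0 \<and> b \<ge> 0 \<and> p = (\<lambda>t. b + a * t))
       \<or> (\<exists>a b \<tau>. a \<ge> 0 \<and> b \<ge> 0 \<and> \<tau> > 0 \<and> p = (\<lambda>t. max \<tau> (b - a * t)))"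
    and "(alg_step p s pri M)\<^sup>*\<^sup>* ((\<lambda>_. 0), N, sigma0) (l, {}, sigma)"
  shows "is_NE P s pri N M sigma"
proof -
  have inj: "\<forall>j\<in>M. inj_on (pri j) N" using assms(6) bij_betw_imp_inj_on by blast
  have pnn: "\<forall>t\<ge>0. p t \<ge> 0"
    using assms(8) by (auto simp: max_def)
  have init: "Inv p s pri N M ((\<lambda>_. 0), N, sigma0)"
  proof -
    have e: "\<And>j. card {x\<in>N. x \<notin> N \<and> sigma0 x = j} = 0"
    proof -
      fix j
      have "{x\<in>N. x \<notin> N \<and> sigma0 x = j} = {}" by blast
      then show "card {x\<in>N. x \<notin> N \<and> sigma0 x = j} = 0" by (simp only: card.empty)
    qed
    show ?thesis by (simp add: Inv_def GG_def e)
  qed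
  have "Inv p s pri N M st'" if "(alg_step p s pri M)\<^sup>*\<^sup>* st st'" "Inv p s pri N M st" for st st'
    using that
  proof (induction rule: rtranclp_induct)
    case base then show ?case by simp
  next
    case (step y z) then show ?case
      using step_pres[of p s pri M y z N] assms(1,5) inj pnn by blast
  qed
  from this[OF assms(9) init] have
    SM: "\<forall>i\<in>N. sigma i \<in> M"
    and C: "\<forall>i\<in>N. \<forall>j\<in>M.
        GG p (s (sigma i)) (Suc (card {x\<in>N. sigma x = sigma i \<and> pri (sigma i) x < pri (sigma i) i}))
        \<le> GG p (s j) (Suc (card {x\<in>N. sigma x = j \<and> x \<noteq> i \<and> pri j x < pri j i}))"
    unfolding Inv_def by auto
  show ?thesis unfolding is_NE_def
  proof (intro conjI ballI)
    fix i assume "i \<in> N" then show "sigma i \<in> M" using SM by blast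
  next
    fix i j assume i: "i \<in> N" and j: "j \<in> M"
    have e1: "completion P s pri N sigma i =
      GG p (s (sigma i)) (Suc (card {x\<in>N. sigma x = sigma i \<and> pri (sigma i) x < pri (sigma i) i}))"
      by (rule completion_eq) (use assms(1,7) i inj SM in auto)
    have e2: "completion P s pri N (sigma(i := j)) i =
      GG p (s j) (Suc (card {x\<in>N. (sigma(i:=j)) x = j \<and> pri j x < pri j i}))"
      using completion_eq[of N i pri "sigma(i := j)" P p s] assms(1,7) i inj j by auto
    have le: "GG p (s (sigma i)) (Suc (card {x\<in>N. sigma x = sigma i \<and> pri (sigma i) x < pri (sigma i) i}))
        \<le> GG p (s j) (Suc (card {x\<in>N. sigma x = j \<and> x \<noteq> i \<and> pri j x < pri j i}))"
      using bspec[OF bspec[OF C i] j] .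
    have "{x\<in>N. (sigma(i:=j)) x = j \<and> pri j x < pri j i} = {x\<in>N. sigma x = j \<and> x \<noteq> i \<and> pri j x < pri j i}"
      by auto
    note seteq = this
    have e3: "completion P s pri N (sigma(i := j)) i = GG p (s j) (Suc (card {x\<in>N. sigma x = j \<and> x \<noteq> i \<and> pri j x < pri j i}))"
      unfolding seteq[symmetric] by (rule e2)
    show "\<not> completion P s pri N (sigma(i := j)) i < completion P s pri N sigma i"
      using e1 e3 le by linarith
  qed
qed

end
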